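(* Let $R$ be an associative ring with identity and $M$ a left $R$-module which is projective in $\sigma[M]$. Then $Nil_*(M)\subseteq Rad(M)$.
   Context: $\Lambda^{fi}(M)$ is the set of fully invariant submodules of $M$. For $N,L\leq M$, $N_ML=\sum\{f(N)\mid f\in\mathrm{Hom}_R(M,L)\}$. $Spec(\Lambda^{fi}(M))$ is the set of $Q\in\Lambda^{fi}(M)$, $Q\neq M$, such that for all $N,L\in\Lambda^{fi}(M)$, $N_ML\subseteq Q$ implies $N\subseteq Q$ or $L\subseteq Q$. The lowest radical of $M$ is $Nil_*(M)=\bigcap\{Q\mid Q\in Spec(\Lambda^{fi}(M))\}$. $Rad(M)$ is the Jacobson radical of $M$ (intersection of all maximal submodules). *)

theory Defs
  imports "HOL-Algebra.Module"
begin

text \<open>HOL-Algebra's locale module requires a commutative ring, so we define left modules directly.\<close>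

definition lmodule :: "('r, 'z) ring_scheme \<Rightarrow> ('r, 'a) module \<Rightarrow> bool" where
  "lmodule R M \<longleftrightarrow> ring R \<and> abelian_group M \<and>
     (\<forall>a\<in>carrier R. \<forall>x\<in>carrier M. a \<odot>\<^bsub>M\<^esub> x \<in> carrier M) \<and>
     (\<forall>a\<in>carrier R. \<forall>b\<in>carrier R. \<forall>x\<in>carrier M.
        (a \<oplus>\<^bsub>R\<^esub> b) \<odot>\<^bsub>M\<^esub> x = a \<odot>\<^bsub>M\<^esub> x \<oplus>\<^bsub>M\<^esub> b \<odot>\<^bsub>M\<^esub> x) \<and>
     (\<forall>a\<in>carrier R. \<forall>x\<in>carrier M. \<forall>y\<in>carrier M.
        a \<odot>\<^bsub>M\<^esub> (x \<oplus>\<^bsub>M\<^esub> y) = a \<odot>\<^bsub>M\<^esub> x \<oplus>\<^bsub>M\<^esub> a \<odot>\<^bsub>M\<^esub> y) \<and>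
     (\<forall>a\<in>carrier R. \<forall>b\<in>carrier R. \<forall>x\<in>carrier M.
        (a \<otimes>\<^bsub>R\<^esub> b) \<odot>\<^bsub>M\<^esub> x = a \<odot>\<^bsub>M\<^esub> (b \<odot>\<^bsub>M\<^esub> x)) \<and>
     (\<forall>x\<in>carrier M. \<one>\<^bsub>R\<^esub> \<odot>\<^bsub>M\<^esub> x = x)"

definition submod :: "('r, 'z) ring_scheme \<Rightarrow> ('r, 'a) module \<Rightarrow> 'a set \<Rightarrow> bool" where
  "submod R M N \<longleftrightarrow> N \<subseteq> carrier M \<and> \<zero>\<^bsub>M\<^esub> \<in> N \<and>
     (\<forall>x\<in>N. \<forall>y\<in>N. x \<oplus>\<^bsub>M\<^esub> y \<in> N) \<and> (\<forall>x\<in>N. \<ominus>\<^bsub>M\<^esub> x \<in> N) \<and>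
     (\<forall>a\<in>carrier R. \<forall>x\<in>N. a \<odot>\<^bsub>M\<^esub> x \<in> N)"

text \<open>Submodule generated by a subset S (so the sum of a family of submodules is the
  submodule generated by their union).\<close>
definition gen_submod :: "('r, 'z) ring_scheme \<Rightarrow> ('r, 'a) module \<Rightarrow> 'a set \<Rightarrow> 'a set" where
  "gen_submod R M S = carrier M \<inter> \<Inter> {N. submod R M N \<and> S \<subseteq> N}"

definition mod_hom :: "('r, 'z) ring_scheme \<Rightarrow> ('r, 'a) module \<Rightarrow> ('r, 'b) module \<Rightarrow> ('a \<Rightarrow> 'b) set" where
  "mod_hom R M N = {f. (\<forall>x\<in>carrier M. f x \<in> carrier N) \<and>
     (\<forall>x\<in>carrier M. \<forall>y\<in>carrier M. f (x \<oplus>\<^bsub>M\<^esub> y) = f x \<oplus>\<^bsub>N\<^esub> f y) \<and>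
     (\<forall>a\<in>carrier R. \<forall>x\<in>carrier M. f (a \<odot>\<^bsub>M\<^esub> x) = a \<odot>\<^bsub>N\<^esub> f x)}"

text \<open>Endomorphisms f : M \<rightarrow> M with image in L, i.e. Hom_R(M, L) for a submodule L \<le> M.\<close>
definition hom_into :: "('r, 'z) ring_scheme \<Rightarrow> ('r, 'a) module \<Rightarrow> 'a set \<Rightarrow> ('a \<Rightarrow> 'a) set" where
  "hom_into R M L = {f \<in> mod_hom R M M. f ` carrier M \<subseteq> L}"

definition prod_M :: "('r, 'z) ring_scheme \<Rightarrow> ('r, 'a) module \<Rightarrow> 'a set \<Rightarrow> 'a set \<Rightarrow> 'a set" where
  "prod_M R M N L = gen_submod R M (\<Union>f\<in>hom_into R M L. f ` N)"

definition fully_inv :: "('r, 'z) ring_scheme \<Rightarrow> ('r, 'a) module \<Rightarrow> 'a set set" where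
  "fully_inv R M = {N. submod R M N \<and> (\<forall>f\<in>mod_hom R M M. f ` N \<subseteq> N)}"

definition spec_fi :: "('r, 'z) ring_scheme \<Rightarrow> ('r, 'a) module \<Rightarrow> 'a set set" where
  "spec_fi R M = {Q \<in> fully_inv R M. Q \<noteq> carrier M \<and>
     (\<forall>N\<in>fully_inv R M. \<forall>L\<in>fully_inv R M. prod_M R M N L \<subseteq> Q \<longrightarrow> N \<subseteq> Q \<or> L \<subseteq> Q)}"

text \<open>Lowest radical Nil_*(M) (the empty intersection is M).\<close>
definition lowest_radical :: "('r, 'z) ring_scheme \<Rightarrow> ('r, 'a) module \<Rightarrow> 'a set" where
  "lowest_radical R M = carrier M \<inter> \<Inter> (spec_fi R M)"

definition maximal_submod :: "('r, 'z) ring_scheme \<Rightarrow> ('r, 'a) module \<Rightarrow> 'a set \<Rightarrow> bool" where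
  "maximal_submod R M K \<longleftrightarrow> submod R M K \<and> K \<noteq> carrier M \<and>
     (\<forall>K'. submod R M K' \<and> K \<subseteq> K' \<longrightarrow> K' = K \<or> K' = carrier M)"

text \<open>Jacobson radical Rad(M) (the empty intersection is M).\<close>
definition jac_rad :: "('r, 'z) ring_scheme \<Rightarrow> ('r, 'a) module \<Rightarrow> 'a set" where
  "jac_rad R M = carrier M \<inter> \<Inter> {K. maximal_submod R M K}"

definition M_generated :: "('r, 'z) ring_scheme \<Rightarrow> ('r, 'a) module \<Rightarrow> ('r, 'b) module \<Rightarrow> bool" where
  "M_generated R M K \<longleftrightarrow> carrier K = gen_submod R K (\<Union>f\<in>mod_hom R M K. f ` carrier M)"

text \<open>N \<in> \<sigma>[M]: N is (isomorphic to) a submodule of an M-generated module K.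
  The module K is taken with carrier in the same type as N.\<close>
definition in_sigma :: "('r, 'z) ring_scheme \<Rightarrow> ('r, 'a) module \<Rightarrow> ('r, 'b) module \<Rightarrow> bool" where
  "in_sigma R M N \<longleftrightarrow> lmodule R N \<and>
     (\<exists>K :: ('r, 'b) module. lmodule R K \<and> M_generated R M K \<and>
        (\<exists>g\<in>mod_hom R N K. inj_on g (carrier N)))"

text \<open>The modules N, L range over modules
  whose carriers live in the type ('a \<times> nat) set, which is large enough to contain
  (up to isomorphism) all modules relevant to the test.\<close>
definition projective_in_sigma :: "('r, 'z) ring_scheme \<Rightarrow> ('r, 'a) module \<Rightarrow> bool" where
  "projective_in_sigma R M \<longleftrightarrow>
     (\<forall>(N :: ('r, ('a \<times> nat) set) module) (L :: ('r, ('a \<times> nat) set) module).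
        in_sigma R M N \<longrightarrow> in_sigma R M L \<longrightarrow>
        (\<forall>g\<in>mod_hom R N L. \<forall>f\<in>mod_hom R M L. g ` carrier N = carrier L \<longrightarrow>
           (\<exists>h\<in>mod_hom R M N. \<forall>x\<in>carrier M. g (h x) = f x)))"

end

theory Submission
  imports Defs
begin

lemma addhom_basic:
  assumes A: "abelian_group A" and B: "abelian_group B"
    and cl: "\<And>x. x \<in> carrier A \<Longrightarrow> f x \<in> carrier B"
    and ad: "\<And>x y. x \<in> carrier A \<Longrightarrow> y \<in> carrier A \<Longrightarrow> f (x \<oplus>\<^bsub>A\<^esub> y) = f x \<oplus>\<^bsub>B\<^esub> f y"
  shows "f \<zero>\<^bsub>A\<^esub> = \<zero>\<^bsub>B\<^esub>" and "\<And>x. x \<in> carrier A \<Longrightarrow> f (\<ominus>\<^bsub>A\<^esub> x) = \<ominus>\<^bsub>B\<^esub> f x"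
proof -
  interpret A: abelian_group A by fact
  interpret B: abelian_group B by fact
  have c0: "f \<zero>\<^bsub>A\<^esub> \<in> carrier B" using cl by simp
  have "f \<zero>\<^bsub>A\<^esub> \<oplus>\<^bsub>B\<^esub> f \<zero>\<^bsub>A\<^esub> = f \<zero>\<^bsub>A\<^esub> \<oplus>\<^bsub>B\<^esub> \<zero>\<^bsub>B\<^esub>"
    using ad[of "\<zero>\<^bsub>A\<^esub>" "\<zero>\<^bsub>A\<^esub>"] c0 by simp
  then show z: "f \<zero>\<^bsub>A\<^esub> = \<zero>\<^bsub>B\<^esub>" using c0 by (metis B.add.l_cancel_one B.r_zero)
  fix x assume x: "x \<in> carrier A"
  have "f (\<ominus>\<^bsub>A\<^esub> x) \<oplus>\<^bsub>B\<^esub> f x = \<zero>\<^bsub>B\<^esub>"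
    using ad[of "\<ominus>\<^bsub>A\<^esub> x" x] x z by (simp add: A.l_neg)
  then show "f (\<ominus>\<^bsub>A\<^esub> x) = \<ominus>\<^bsub>B\<^esub> f x"
    using x cl by (metis A.a_inv_closed B.minus_equality)
qed

lemma lm_ag: "lmodule R M \<Longrightarrow> abelian_group M" by (simp add: lmodule_def)

lemma lm_smult_basic:
  assumes "lmodule R M" "a \<in> carrier R"
  shows "a \<odot>\<^bsub>M\<^esub> \<zero>\<^bsub>M\<^esub> = \<zero>\<^bsub>M\<^esub>" "\<And>x. x \<in> carrier M \<Longrightarrow> a \<odot>\<^bsub>M\<^esub> (\<ominus>\<^bsub>M\<^esub> x) = \<ominus>\<^bsub>M\<^esub> (a \<odot>\<^bsub>M\<^esub> x)"
  using addhom_basic[of M M "\<lambda>x. a \<odot>\<^bsub>M\<^esub> x"] assms unfolding lmodule_def by auto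

lemma hom_basic:
  assumes "lmodule R M" "lmodule R N" "f \<in> mod_hom R M N"
  shows "f \<zero>\<^bsub>M\<^esub> = \<zero>\<^bsub>N\<^esub>" "\<And>x. x \<in> carrier M \<Longrightarrow> f (\<ominus>\<^bsub>M\<^esub> x) = \<ominus>\<^bsub>N\<^esub> f x"
  using addhom_basic[of M N f] assms unfolding lmodule_def mod_hom_def by auto

lemma hom_comp: "f \<in> mod_hom R M M \<Longrightarrow> g \<in> mod_hom R M M \<Longrightarrow> (\<lambda>x. f (g x)) \<in> mod_hom R M M"
  unfolding mod_hom_def by auto

lemma hom_id: "(\<lambda>x. x) \<in> mod_hom R M M"
  unfolding mod_hom_def by auto

lemma submod_lmodule:
  assumes "lmodule R M" "submod R M S"
  shows "lmodule R (M\<lparr>carrier := S\<rparr>)"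
proof -
  interpret abelian_group M using assms lm_ag by auto
  have S: "S \<subseteq> carrier M" using assms(2) unfolding submod_def by auto
  have "abelian_group (M\<lparr>carrier := S\<rparr>)"
  proof (rule abelian_groupI, goal_cases)
    case 1 then show ?case using assms(2) unfolding submod_def by auto
  next case 2 then show ?case using assms(2) unfolding submod_def by auto
  next case 3 then show ?case using S by (simp add: a_assoc subset_iff)
  next case 4 then show ?case using S by (simp add: a_comm subset_iff)
  next case 5 then show ?case using S by (simp add: subset_iff)

  next case (6 x)
    then have x: "x \<in> carrier M" "\<ominus>\<^bsub>M\<^esub> x \<in> S" using S assms(2) unfolding submod_def by auto
    then show ?case by (auto intro!: bexI[of _ "\<ominus>\<^bsub>M\<^esub> x"] l_neg)
  qed
  moreover have "\<forall>a\<in>carrier R. \<forall>x\<in>S. a \<odot>\<^bsub>M\<^esub> x \<in> S" using assms(2) unfolding submod_def by auto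
  ultimately show ?thesis using assms(1) S unfolding lmodule_def by (simp add: subset_iff)
qed

definition img_rep :: "('r,'a) module \<Rightarrow> ('a \<Rightarrow> 'b) \<Rightarrow> 'b \<Rightarrow> 'a" where
  "img_rep M p u = (SOME x. x \<in> carrier M \<and> p x = u)"

definition img_mod :: "('r,'a) module \<Rightarrow> ('a \<Rightarrow> 'b) \<Rightarrow> ('r,'b) module" where
  "img_mod M p = \<lparr>carrier = p ` carrier M, mult = (\<lambda>u v. u), one = p \<zero>\<^bsub>M\<^esub>,
     zero = p \<zero>\<^bsub>M\<^esub>, add = (\<lambda>u v. p (img_rep M p u \<oplus>\<^bsub>M\<^esub> img_rep M p v)),
     smult = (\<lambda>a u. p (a \<odot>\<^bsub>M\<^esub> img_rep M p u))\<rparr>"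

definition congr :: "('r, 'z) ring_scheme \<Rightarrow> ('r,'a) module \<Rightarrow> ('a \<Rightarrow> 'b) \<Rightarrow> bool" where
  "congr R M p \<longleftrightarrow> (\<forall>x\<in>carrier M. \<forall>x'\<in>carrier M. \<forall>y\<in>carrier M. \<forall>y'\<in>carrier M.
      p x = p x' \<longrightarrow> p y = p y' \<longrightarrow> p (x \<oplus>\<^bsub>M\<^esub> y) = p (x' \<oplus>\<^bsub>M\<^esub> y')) \<and>
    (\<forall>a\<in>carrier R. \<forall>x\<in>carrier M. \<forall>x'\<in>carrier M. p x = p x' \<longrightarrow> p (a \<odot>\<^bsub>M\<^esub> x) = p (a \<odot>\<^bsub>M\<^esub> x'))"

lemma img_rep: "x \<in> carrier M \<Longrightarrow> img_rep M p (p x) \<in> carrier M \<and> p (img_rep M p (p x)) = p x"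
  unfolding img_rep_def by (rule someI[where x=x]) simp

lemma img_carrier[simp]: "carrier (img_mod M p) = p ` carrier M"
  and img_zero[simp]: "\<zero>\<^bsub>img_mod M p\<^esub> = p \<zero>\<^bsub>M\<^esub>"
  by (simp_all add: img_mod_def)

lemma img_add:
  assumes "congr R M p" "x \<in> carrier M" "y \<in> carrier M"
  shows "p x \<oplus>\<^bsub>img_mod M p\<^esub> p y = p (x \<oplus>\<^bsub>M\<^esub> y)"
proof -
  have "p (img_rep M p (p x) \<oplus>\<^bsub>M\<^esub> img_rep M p (p y)) = p (x \<oplus>\<^bsub>M\<^esub> y)"
    using assms(1)[unfolded congr_def] assms(2,3) img_rep[of x M p] img_rep[of y M p] by blast
  then show ?thesis by (simp add: img_mod_def)
qed

lemma img_smult: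
  assumes "congr R M p" "a \<in> carrier R" "x \<in> carrier M"
  shows "a \<odot>\<^bsub>img_mod M p\<^esub> p x = p (a \<odot>\<^bsub>M\<^esub> x)"
proof -
  have "p (a \<odot>\<^bsub>M\<^esub> img_rep M p (p x)) = p (a \<odot>\<^bsub>M\<^esub> x)"
    using assms(1)[unfolded congr_def] assms(2,3) img_rep[of x M p] by blast
  then show ?thesis by (simp add: img_mod_def)
qed

lemma img_lmodule:
  assumes lm: "lmodule R M" and cg: "congr R M p"
  shows "lmodule R (img_mod M p)"
proof -
  interpret abelian_group M using lm lm_ag by auto
  note ad = img_add[OF cg] and sm = img_smult[OF cg]
  have "abelian_group (img_mod M p)"
  proof (rule abelian_groupI, goal_cases)
    case 1 then show ?case using ad by auto
  next case 2 then show ?case by auto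
  next case 3 then show ?case using ad by (auto simp: a_assoc)
  next case 4 then show ?case using ad by (auto simp: a_comm)
  next case 5 then show ?case using ad by auto
  next case (6 u)
    then obtain x where x: "x \<in> carrier M" "u = p x" by auto
    then show ?case using ad[of "\<ominus>\<^bsub>M\<^esub> x" x] by (auto intro!: bexI[of _ "p (\<ominus>\<^bsub>M\<^esub> x)"] simp: l_neg)
  qed
  moreover note L = lm[unfolded lmodule_def]
  ultimately show ?thesis unfolding lmodule_def
  proof (intro conjI ballI, goal_cases)
    case 1 then show ?case using L by simp
  next case 2 then show ?case by simp
  next case (3 a u) then obtain x where "x \<in> carrier M" "u = p x" by auto
    then show ?case using 3 sm L by auto
  next case (4 a b u) then obtain x where x: "x \<in> carrier M" "u = p x" by auto
    then show ?case using 4 sm ad L by (simp add: ring.ring_simprules(1))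
  next case (5 a u v) then obtain x y where x: "x \<in> carrier M" "u = p x" "y \<in> carrier M" "v = p y" by auto
    then show ?case using 5 sm ad L by simp
  next case (6 a b u) then obtain x where x: "x \<in> carrier M" "u = p x" by auto
    then show ?case using 6 sm L by (simp add: ring.ring_simprules(5))
  next case (7 u) then obtain x where x: "x \<in> carrier M" "u = p x" by auto
    then show ?case using 7 sm L by (simp add: ring.ring_simprules(6))
  qed
qed

lemma img_hom:
  assumes "congr R M p"
  shows "p \<in> mod_hom R M (img_mod M p)"
  using img_add[OF assms] img_smult[OF assms] unfolding mod_hom_def by auto

lemma surj_M_generated:
  assumes "f \<in> mod_hom R M K" "f ` carrier M = carrier K"
  shows "M_generated R M K"
proof -
  have "carrier K \<subseteq> (\<Union>f\<in>mod_hom R M K. f ` carrier M)" using assms by auto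
  moreover have "(\<Union>f\<in>mod_hom R M K. f ` carrier M) \<subseteq> carrier K" unfolding mod_hom_def by auto
  ultimately show ?thesis unfolding M_generated_def gen_submod_def by auto
qed

lemma in_sigmaI:
  fixes N K :: "('r, 'b) module"
  assumes "lmodule R N" "lmodule R K" "f \<in> mod_hom R M K" "f ` carrier M = carrier K"
    "g \<in> mod_hom R N K" "inj_on g (carrier N)"
  shows "in_sigma R M N"
  unfolding in_sigma_def using assms surj_M_generated by blast

lemma inj_congr: "inj p \<Longrightarrow> congr R M p"
  unfolding congr_def inj_def by auto

definition qmap :: "('r,'a) module \<Rightarrow> 'a set \<Rightarrow> 'a \<Rightarrow> ('a \<times> nat) set" where
  "qmap M K x = (\<lambda>y. (y, 0::nat)) ` {y \<in> carrier M. x \<oplus>\<^bsub>M\<^esub> \<ominus>\<^bsub>M\<^esub> y \<in> K}"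

lemma ag_alg1:
  assumes "abelian_group M" "x \<in> carrier M" "y \<in> carrier M" "z \<in> carrier M"
  shows "(x \<oplus>\<^bsub>M\<^esub> \<ominus>\<^bsub>M\<^esub> y) \<oplus>\<^bsub>M\<^esub> \<ominus>\<^bsub>M\<^esub> (x \<oplus>\<^bsub>M\<^esub> \<ominus>\<^bsub>M\<^esub> z) = z \<oplus>\<^bsub>M\<^esub> \<ominus>\<^bsub>M\<^esub> y"
proof -
  interpret abelian_group M by fact
  show ?thesis using assms(2-) by (simp add: minus_add minus_minus a_ac r_neg1 r_neg2)
qed

lemma ag_alg2:
  assumes "abelian_group M" "x \<in> carrier M" "y \<in> carrier M"
  shows "\<ominus>\<^bsub>M\<^esub> (x \<oplus>\<^bsub>M\<^esub> \<ominus>\<^bsub>M\<^esub> y) = y \<oplus>\<^bsub>M\<^esub> \<ominus>\<^bsub>M\<^esub> x"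
proof -
  interpret abelian_group M by fact
  show ?thesis using assms(2-) by (simp add: minus_add minus_minus a_ac)
qed

lemma ag_alg3:
  assumes "abelian_group M" "x \<in> carrier M" "y \<in> carrier M" "x' \<in> carrier M" "y' \<in> carrier M"
  shows "(x \<oplus>\<^bsub>M\<^esub> y) \<oplus>\<^bsub>M\<^esub> \<ominus>\<^bsub>M\<^esub> (x' \<oplus>\<^bsub>M\<^esub> y') = (x \<oplus>\<^bsub>M\<^esub> \<ominus>\<^bsub>M\<^esub> x') \<oplus>\<^bsub>M\<^esub> (y \<oplus>\<^bsub>M\<^esub> \<ominus>\<^bsub>M\<^esub> y')"
proof -
  interpret abelian_group M by fact
  show ?thesis using assms(2-) by (simp add: minus_add a_ac)
qed

lemma ag_alg4:
  assumes "abelian_group M" "x \<in> carrier M" "y \<in> carrier M"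
  shows "(x \<oplus>\<^bsub>M\<^esub> \<ominus>\<^bsub>M\<^esub> y) \<oplus>\<^bsub>M\<^esub> y = x"
proof -
  interpret abelian_group M by fact
  show ?thesis using assms(2-) by (simp add: a_ac r_neg1 r_neg2 r_neg)
qed

lemma qmap_eq:
  assumes lm: "lmodule R M" and K: "submod R M K" and x: "x \<in> carrier M" and x': "x' \<in> carrier M"
  shows "qmap M K x = qmap M K x' \<longleftrightarrow> x \<oplus>\<^bsub>M\<^esub> \<ominus>\<^bsub>M\<^esub> x' \<in> K"
proof -
  interpret abelian_group M using lm lm_ag by auto
  have Ks: "K \<subseteq> carrier M" "\<zero>\<^bsub>M\<^esub> \<in> K" "\<And>a b. a \<in> K \<Longrightarrow> b \<in> K \<Longrightarrow> a \<oplus>\<^bsub>M\<^esub> b \<in> K"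
     "\<And>a. a \<in> K \<Longrightarrow> \<ominus>\<^bsub>M\<^esub> a \<in> K" using K unfolding submod_def by auto
  show ?thesis
  proof
    assume e: "qmap M K x = qmap M K x'"
    have "(x, 0) \<in> qmap M K x" using x Ks(2) by (auto simp: qmap_def r_neg)
    then have "(x, 0) \<in> qmap M K x'" using e by simp
    then have "x' \<oplus>\<^bsub>M\<^esub> \<ominus>\<^bsub>M\<^esub> x \<in> K" unfolding qmap_def by auto
    then have "\<ominus>\<^bsub>M\<^esub> (x' \<oplus>\<^bsub>M\<^esub> \<ominus>\<^bsub>M\<^esub> x) \<in> K" using Ks(4) by blast
    then show "x \<oplus>\<^bsub>M\<^esub> \<ominus>\<^bsub>M\<^esub> x' \<in> K" using ag_alg2[of M x' x] x x' lm lm_ag by metis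
  next
    assume d: "x \<oplus>\<^bsub>M\<^esub> \<ominus>\<^bsub>M\<^esub> x' \<in> K"
    have "\<And>y. y \<in> carrier M \<Longrightarrow> x \<oplus>\<^bsub>M\<^esub> \<ominus>\<^bsub>M\<^esub> y \<in> K \<longleftrightarrow> x' \<oplus>\<^bsub>M\<^esub> \<ominus>\<^bsub>M\<^esub> y \<in> K"
    proof
      fix y assume y: "y \<in> carrier M" "x \<oplus>\<^bsub>M\<^esub> \<ominus>\<^bsub>M\<^esub> y \<in> K"
      then have "(x \<oplus>\<^bsub>M\<^esub> \<ominus>\<^bsub>M\<^esub> y) \<oplus>\<^bsub>M\<^esub> \<ominus>\<^bsub>M\<^esub> (x \<oplus>\<^bsub>M\<^esub> \<ominus>\<^bsub>M\<^esub> x') \<in> K"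
        using d Ks by blast
      then show "x' \<oplus>\<^bsub>M\<^esub> \<ominus>\<^bsub>M\<^esub> y \<in> K" using ag_alg1[of M x y x'] x x' y lm lm_ag by metis
    next
      fix y assume y: "y \<in> carrier M" "x' \<oplus>\<^bsub>M\<^esub> \<ominus>\<^bsub>M\<^esub> y \<in> K"
      have d': "x' \<oplus>\<^bsub>M\<^esub> \<ominus>\<^bsub>M\<^esub> x \<in> K" using d Ks(4) ag_alg2[of M x x'] x x' lm lm_ag by metis
      from y have "(x' \<oplus>\<^bsub>M\<^esub> \<ominus>\<^bsub>M\<^esub> y) \<oplus>\<^bsub>M\<^esub> \<ominus>\<^bsub>M\<^esub> (x' \<oplus>\<^bsub>M\<^esub> \<ominus>\<^bsub>M\<^esub> x) \<in> K"
        using d' Ks by blast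
      then show "x \<oplus>\<^bsub>M\<^esub> \<ominus>\<^bsub>M\<^esub> y \<in> K" using ag_alg1[of M x' y x] x x' y lm lm_ag by metis
    qed
    then show "qmap M K x = qmap M K x'" unfolding qmap_def by (intro arg_cong[where f="image _"]) auto
  qed
qed

lemma qmap_congr:
  assumes lm: "lmodule R M" and K: "submod R M K"
  shows "congr R M (qmap M K)"
proof -
  have ag: "abelian_group M" using lm lm_ag by auto
  interpret abelian_group M by fact
  have Ks: "\<And>a b. a \<in> K \<Longrightarrow> b \<in> K \<Longrightarrow> a \<oplus>\<^bsub>M\<^esub> b \<in> K"
     "\<And>a r. r \<in> carrier R \<Longrightarrow> a \<in> K \<Longrightarrow> r \<odot>\<^bsub>M\<^esub> a \<in> K" using K unfolding submod_def by auto
  have L: "\<And>a x. a \<in> carrier R \<Longrightarrow> x \<in> carrier M \<Longrightarrow> a \<odot>\<^bsub>M\<^esub> x \<in> carrier M"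
    "\<And>a x y. a \<in> carrier R \<Longrightarrow> x \<in> carrier M \<Longrightarrow> y \<in> carrier M \<Longrightarrow> a \<odot>\<^bsub>M\<^esub> (x \<oplus>\<^bsub>M\<^esub> y) = a \<odot>\<^bsub>M\<^esub> x \<oplus>\<^bsub>M\<^esub> a \<odot>\<^bsub>M\<^esub> y"
    using lm unfolding lmodule_def by auto
  show ?thesis unfolding congr_def
  proof (intro conjI ballI impI)
    fix x x' y y' assume xs: "x \<in> carrier M" "x' \<in> carrier M" "y \<in> carrier M" "y' \<in> carrier M"
      and e: "qmap M K x = qmap M K x'" "qmap M K y = qmap M K y'"
    then have "x \<oplus>\<^bsub>M\<^esub> \<ominus>\<^bsub>M\<^esub> x' \<in> K" "y \<oplus>\<^bsub>M\<^esub> \<ominus>\<^bsub>M\<^esub> y' \<in> K" using qmap_eq[OF lm K] by auto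
    then have "(x \<oplus>\<^bsub>M\<^esub> y) \<oplus>\<^bsub>M\<^esub> \<ominus>\<^bsub>M\<^esub> (x' \<oplus>\<^bsub>M\<^esub> y') \<in> K" using Ks ag_alg3[of M x y x' y'] ag xs by metis
    then show "qmap M K (x \<oplus>\<^bsub>M\<^esub> y) = qmap M K (x' \<oplus>\<^bsub>M\<^esub> y')" using qmap_eq[OF lm K] xs by simp
  next
    fix a x x' assume a: "a \<in> carrier R" and xs: "x \<in> carrier M" "x' \<in> carrier M"
      and e: "qmap M K x = qmap M K x'"
    then have "x \<oplus>\<^bsub>M\<^esub> \<ominus>\<^bsub>M\<^esub> x' \<in> K" using qmap_eq[OF lm K] by auto
    then have "a \<odot>\<^bsub>M\<^esub> (x \<oplus>\<^bsub>M\<^esub> \<ominus>\<^bsub>M\<^esub> x') \<in> K" using Ks a by blast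
    moreover have "a \<odot>\<^bsub>M\<^esub> (x \<oplus>\<^bsub>M\<^esub> \<ominus>\<^bsub>M\<^esub> x') = a \<odot>\<^bsub>M\<^esub> x \<oplus>\<^bsub>M\<^esub> \<ominus>\<^bsub>M\<^esub> (a \<odot>\<^bsub>M\<^esub> x')"
      using L a xs lm_smult_basic(2)[OF lm a] by simp
    ultimately show "qmap M K (a \<odot>\<^bsub>M\<^esub> x) = qmap M K (a \<odot>\<^bsub>M\<^esub> x')" using qmap_eq[OF lm K] xs L a by simp
  qed
qed

lemma ag_alg5:
  assumes "abelian_group M" "y \<in> carrier M" "l \<in> carrier M"
  shows "\<ominus>\<^bsub>M\<^esub> y \<oplus>\<^bsub>M\<^esub> \<ominus>\<^bsub>M\<^esub> (\<ominus>\<^bsub>M\<^esub> l) = \<ominus>\<^bsub>M\<^esub> (y \<oplus>\<^bsub>M\<^esub> \<ominus>\<^bsub>M\<^esub> l)"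
proof -
  interpret abelian_group M by fact
  show ?thesis using assms(2-) by (simp add: minus_add a_ac)
qed

lemma ag_alg6:
  assumes "abelian_group M" "y \<in> carrier M"
  shows "y \<oplus>\<^bsub>M\<^esub> \<ominus>\<^bsub>M\<^esub> \<zero>\<^bsub>M\<^esub> = y" "y \<oplus>\<^bsub>M\<^esub> \<ominus>\<^bsub>M\<^esub> y = \<zero>\<^bsub>M\<^esub>"
proof -
  interpret abelian_group M by fact
  show "y \<oplus>\<^bsub>M\<^esub> \<ominus>\<^bsub>M\<^esub> \<zero>\<^bsub>M\<^esub> = y" "y \<oplus>\<^bsub>M\<^esub> \<ominus>\<^bsub>M\<^esub> y = \<zero>\<^bsub>M\<^esub>"
    using assms(2-) by (simp_all add: r_neg)
qed

lemma sum_submod: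
  assumes lm: "lmodule R M" and K: "submod R M K" and L: "submod R M L"
  shows "submod R M {y \<in> carrier M. \<exists>l\<in>L. y \<oplus>\<^bsub>M\<^esub> \<ominus>\<^bsub>M\<^esub> l \<in> K}"
proof -
  have ag: "abelian_group M" using lm lm_ag by auto
  interpret abelian_group M by fact
  have Ks: "K \<subseteq> carrier M" "\<zero>\<^bsub>M\<^esub> \<in> K" "\<And>a b. a \<in> K \<Longrightarrow> b \<in> K \<Longrightarrow> a \<oplus>\<^bsub>M\<^esub> b \<in> K"
     "\<And>a. a \<in> K \<Longrightarrow> \<ominus>\<^bsub>M\<^esub> a \<in> K" "\<And>a r. r \<in> carrier R \<Longrightarrow> a \<in> K \<Longrightarrow> r \<odot>\<^bsub>M\<^esub> a \<in> K"
    using K unfolding submod_def by auto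
  have Ls: "L \<subseteq> carrier M" "\<zero>\<^bsub>M\<^esub> \<in> L" "\<And>a b. a \<in> L \<Longrightarrow> b \<in> L \<Longrightarrow> a \<oplus>\<^bsub>M\<^esub> b \<in> L"
     "\<And>a. a \<in> L \<Longrightarrow> \<ominus>\<^bsub>M\<^esub> a \<in> L" "\<And>a r. r \<in> carrier R \<Longrightarrow> a \<in> L \<Longrightarrow> r \<odot>\<^bsub>M\<^esub> a \<in> L"
    using L unfolding submod_def by auto
  have Lm: "\<And>a x. a \<in> carrier R \<Longrightarrow> x \<in> carrier M \<Longrightarrow> a \<odot>\<^bsub>M\<^esub> x \<in> carrier M"
    "\<And>a x y. a \<in> carrier R \<Longrightarrow> x \<in> carrier M \<Longrightarrow> y \<in> carrier M \<Longrightarrow> a \<odot>\<^bsub>M\<^esub> (x \<oplus>\<^bsub>M\<^esub> y) = a \<odot>\<^bsub>M\<^esub> x \<oplus>\<^bsub>M\<^esub> a \<odot>\<^bsub>M\<^esub> y"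
    using lm unfolding lmodule_def by auto
  show ?thesis unfolding submod_def
  proof (intro conjI ballI)
    show "{y \<in> carrier M. \<exists>l\<in>L. y \<oplus>\<^bsub>M\<^esub> \<ominus>\<^bsub>M\<^esub> l \<in> K} \<subseteq> carrier M" by auto
    show "\<zero>\<^bsub>M\<^esub> \<in> {y \<in> carrier M. \<exists>l\<in>L. y \<oplus>\<^bsub>M\<^esub> \<ominus>\<^bsub>M\<^esub> l \<in> K}"
      using Ls(2) Ks(2) Ks(4) ag_alg6[OF ag, of "\<zero>\<^bsub>M\<^esub>"] by (auto intro!: bexI[of _ "\<zero>\<^bsub>M\<^esub>"])
  next
    fix x y assume x: "x \<in> {y \<in> carrier M. \<exists>l\<in>L. y \<oplus>\<^bsub>M\<^esub> \<ominus>\<^bsub>M\<^esub> l \<in> K}"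
      and y: "y \<in> {y \<in> carrier M. \<exists>l\<in>L. y \<oplus>\<^bsub>M\<^esub> \<ominus>\<^bsub>M\<^esub> l \<in> K}"
    then obtain l1 l2 where l: "l1 \<in> L" "l2 \<in> L" "x \<oplus>\<^bsub>M\<^esub> \<ominus>\<^bsub>M\<^esub> l1 \<in> K" "y \<oplus>\<^bsub>M\<^esub> \<ominus>\<^bsub>M\<^esub> l2 \<in> K"
      "x \<in> carrier M" "y \<in> carrier M" by auto
    have "(x \<oplus>\<^bsub>M\<^esub> y) \<oplus>\<^bsub>M\<^esub> \<ominus>\<^bsub>M\<^esub> (l1 \<oplus>\<^bsub>M\<^esub> l2) \<in> K"
      using ag_alg3[OF ag, of x y l1 l2] l Ls(1) Ks(3) by (simp add: subset_iff)
    then show "x \<oplus>\<^bsub>M\<^esub> y \<in> {y \<in> carrier M. \<exists>l\<in>L. y \<oplus>\<^bsub>M\<^esub> \<ominus>\<^bsub>M\<^esub> l \<in> K}"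
      using l Ls(3) by auto
  next
    fix x assume x: "x \<in> {y \<in> carrier M. \<exists>l\<in>L. y \<oplus>\<^bsub>M\<^esub> \<ominus>\<^bsub>M\<^esub> l \<in> K}"
    then obtain l1 where l: "l1 \<in> L" "x \<oplus>\<^bsub>M\<^esub> \<ominus>\<^bsub>M\<^esub> l1 \<in> K" "x \<in> carrier M" by auto
    have "\<ominus>\<^bsub>M\<^esub> x \<oplus>\<^bsub>M\<^esub> \<ominus>\<^bsub>M\<^esub> (\<ominus>\<^bsub>M\<^esub> l1) \<in> K"
      using ag_alg5[OF ag, of x l1] l Ls(1) Ks(4) by (simp add: subset_iff)
    then show "\<ominus>\<^bsub>M\<^esub> x \<in> {y \<in> carrier M. \<exists>l\<in>L. y \<oplus>\<^bsub>M\<^esub> \<ominus>\<^bsub>M\<^esub> l \<in> K}"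
      using l Ls(4) by auto
  next
    fix a x assume a: "a \<in> carrier R" and x: "x \<in> {y \<in> carrier M. \<exists>l\<in>L. y \<oplus>\<^bsub>M\<^esub> \<ominus>\<^bsub>M\<^esub> l \<in> K}"
    then obtain l1 where l: "l1 \<in> L" "x \<oplus>\<^bsub>M\<^esub> \<ominus>\<^bsub>M\<^esub> l1 \<in> K" "x \<in> carrier M" by auto
    have l1: "l1 \<in> carrier M" using l Ls(1) by auto
    have "a \<odot>\<^bsub>M\<^esub> (x \<oplus>\<^bsub>M\<^esub> \<ominus>\<^bsub>M\<^esub> l1) = a \<odot>\<^bsub>M\<^esub> x \<oplus>\<^bsub>M\<^esub> \<ominus>\<^bsub>M\<^esub> (a \<odot>\<^bsub>M\<^esub> l1)"
      using Lm a l l1 lm_smult_basic(2)[OF lm a] by simp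
    then have "a \<odot>\<^bsub>M\<^esub> x \<oplus>\<^bsub>M\<^esub> \<ominus>\<^bsub>M\<^esub> (a \<odot>\<^bsub>M\<^esub> l1) \<in> K" using Ks(5) a l by metis
    then show "a \<odot>\<^bsub>M\<^esub> x \<in> {y \<in> carrier M. \<exists>l\<in>L. y \<oplus>\<^bsub>M\<^esub> \<ominus>\<^bsub>M\<^esub> l \<in> K}"
      using l Ls(5) a Lm(1) by auto
  qed
qed

lemma lift_into_L:
  fixes R :: "('r, 'z) ring_scheme" and M :: "('r, 'a) module"
  assumes lm: "lmodule R M" and proj: "projective_in_sigma R M"
    and K: "submod R M K" and L: "submod R M L"
    and all: "\<forall>y\<in>carrier M. \<exists>l\<in>L. y \<oplus>\<^bsub>M\<^esub> \<ominus>\<^bsub>M\<^esub> l \<in> K"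
  shows "\<exists>h0 \<in> hom_into R M L. \<forall>x\<in>carrier M. h0 x \<oplus>\<^bsub>M\<^esub> \<ominus>\<^bsub>M\<^esub> x \<in> K"
proof -
  define pL :: "'a \<Rightarrow> ('a \<times> nat) set" where "pL = (\<lambda>y. {(y, 0)})"
  have injp: "inj pL" unfolding pL_def inj_def by auto
  define MLs where "MLs = M\<lparr>carrier := L\<rparr>"
  have lmL: "lmodule R MLs" unfolding MLs_def by (rule submod_lmodule[OF lm L])
  have Lsub: "L \<subseteq> carrier M" using L unfolding submod_def by auto
  have LsubD: "\<And>x. x \<in> L \<Longrightarrow> x \<in> carrier M" using Lsub by auto
  define N' where "N' = img_mod MLs pL"
  define Mp where "Mp = img_mod M pL"
  define Lq where "Lq = img_mod M (qmap M K)"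
  have cgL: "congr R MLs pL" and cgM: "congr R M pL" using injp inj_congr by auto
  have cgq: "congr R M (qmap M K)" by (rule qmap_congr[OF lm K])
  have lmN': "lmodule R N'" unfolding N'_def by (rule img_lmodule[OF lmL cgL])
  have lmMp: "lmodule R Mp" unfolding Mp_def by (rule img_lmodule[OF lm cgM])
  have lmLq: "lmodule R Lq" unfolding Lq_def by (rule img_lmodule[OF lm cgq])
  have cN': "carrier N' = pL ` L" unfolding N'_def MLs_def by simp
  have addN': "\<And>x y. x \<in> L \<Longrightarrow> y \<in> L \<Longrightarrow> pL x \<oplus>\<^bsub>N'\<^esub> pL y = pL (x \<oplus>\<^bsub>M\<^esub> y)"
    using img_add[OF cgL] unfolding N'_def MLs_def by simp
  have smN': "\<And>a x. a \<in> carrier R \<Longrightarrow> x \<in> L \<Longrightarrow> a \<odot>\<^bsub>N'\<^esub> pL x = pL (a \<odot>\<^bsub>M\<^esub> x)"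
    using img_smult[OF cgL] unfolding N'_def MLs_def by simp
  have addMp: "\<And>x y. x \<in> carrier M \<Longrightarrow> y \<in> carrier M \<Longrightarrow> pL x \<oplus>\<^bsub>Mp\<^esub> pL y = pL (x \<oplus>\<^bsub>M\<^esub> y)"
    using img_add[OF cgM] unfolding Mp_def by simp
  have smMp: "\<And>a x. a \<in> carrier R \<Longrightarrow> x \<in> carrier M \<Longrightarrow> a \<odot>\<^bsub>Mp\<^esub> pL x = pL (a \<odot>\<^bsub>M\<^esub> x)"
    using img_smult[OF cgM] unfolding Mp_def by simp
  have Lcl: "\<And>x y. x \<in> L \<Longrightarrow> y \<in> L \<Longrightarrow> x \<oplus>\<^bsub>M\<^esub> y \<in> L"
    "\<And>a x. a \<in> carrier R \<Longrightarrow> x \<in> L \<Longrightarrow> a \<odot>\<^bsub>M\<^esub> x \<in> L"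
    using L unfolding submod_def by auto
  have idh: "(\<lambda>u. u) \<in> mod_hom R N' Mp"
    unfolding mod_hom_def
  proof (intro CollectI conjI ballI)
    fix u assume "u \<in> carrier N'" then show "u \<in> carrier Mp" using cN' Lsub unfolding Mp_def by auto
  next
    fix u v assume "u \<in> carrier N'" "v \<in> carrier N'"
    then obtain x y where "x \<in> L" "y \<in> L" "u = pL x" "v = pL y" using cN' by auto
    then show "u \<oplus>\<^bsub>N'\<^esub> v = u \<oplus>\<^bsub>Mp\<^esub> v" using addN' addMp LsubD by auto
  next
    fix a u assume "a \<in> carrier R" "u \<in> carrier N'"
    then obtain x where "x \<in> L" "u = pL x" using cN' by auto
    then show "a \<odot>\<^bsub>N'\<^esub> u = a \<odot>\<^bsub>Mp\<^esub> u" using smN' smMp LsubD \<open>a \<in> carrier R\<close> by auto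
  qed
  have sigN': "in_sigma R M N'"
    by (rule in_sigmaI[OF lmN' lmMp img_hom[OF cgM, folded Mp_def] _ idh]) (auto simp: Mp_def)
  have sigLq: "in_sigma R M Lq"
    by (rule in_sigmaI[OF lmLq lmLq img_hom[OF cgq, folded Lq_def] _ hom_id]) (auto simp: Lq_def)
  define g :: "('a \<times> nat) set \<Rightarrow> ('a \<times> nat) set" where "g = (\<lambda>u. qmap M K (fst (the_elem u)))"
  have gp: "\<And>x. g (pL x) = qmap M K x" unfolding g_def pL_def by simp
  have addLq: "\<And>x y. x \<in> carrier M \<Longrightarrow> y \<in> carrier M \<Longrightarrow> qmap M K x \<oplus>\<^bsub>Lq\<^esub> qmap M K y = qmap M K (x \<oplus>\<^bsub>M\<^esub> y)"
    using img_add[OF cgq] unfolding Lq_def by simp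
  have smLq: "\<And>a x. a \<in> carrier R \<Longrightarrow> x \<in> carrier M \<Longrightarrow> a \<odot>\<^bsub>Lq\<^esub> qmap M K x = qmap M K (a \<odot>\<^bsub>M\<^esub> x)"
    using img_smult[OF cgq] unfolding Lq_def by simp
  have ghom: "g \<in> mod_hom R N' Lq"
    unfolding mod_hom_def
  proof (intro CollectI conjI ballI)
    fix u assume "u \<in> carrier N'" then show "g u \<in> carrier Lq" using cN' Lsub gp unfolding Lq_def by auto
  next
    fix u v assume "u \<in> carrier N'" "v \<in> carrier N'"
    then obtain x y where "x \<in> L" "y \<in> L" "u = pL x" "v = pL y" using cN' by auto
    then show "g (u \<oplus>\<^bsub>N'\<^esub> v) = g u \<oplus>\<^bsub>Lq\<^esub> g v" using addN' addLq gp LsubD by auto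
  next
    fix a u assume "a \<in> carrier R" "u \<in> carrier N'"
    then obtain x where "x \<in> L" "u = pL x" using cN' by auto
    then show "g (a \<odot>\<^bsub>N'\<^esub> u) = a \<odot>\<^bsub>Lq\<^esub> g u" using smN' smLq gp LsubD \<open>a \<in> carrier R\<close> by auto
  qed
  have fhom: "qmap M K \<in> mod_hom R M Lq" unfolding Lq_def by (rule img_hom[OF cgq])
  have gsurj: "g ` carrier N' = carrier Lq"
  proof
    show "g ` carrier N' \<subseteq> carrier Lq" using ghom unfolding mod_hom_def by auto
    show "carrier Lq \<subseteq> g ` carrier N'"
    proof
      fix w assume "w \<in> carrier Lq"
      then obtain y where y: "y \<in> carrier M" "w = qmap M K y" unfolding Lq_def by auto
      then obtain l where l: "l \<in> L" "y \<oplus>\<^bsub>M\<^esub> \<ominus>\<^bsub>M\<^esub> l \<in> K" using all by auto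
      then have "qmap M K y = qmap M K l" using qmap_eq[OF lm K] y Lsub by auto
      then have "w = g (pL l)" using y(2) gp[of l] by argo
      then show "w \<in> g ` carrier N'" using l cN' by auto
    qed
  qed
  obtain h where h: "h \<in> mod_hom R M N'" "\<forall>x\<in>carrier M. g (h x) = qmap M K x"
    using proj[unfolded projective_in_sigma_def, rule_format, OF sigN' sigLq ghom fhom gsurj] by blast
  define h0 where "h0 = (\<lambda>x. fst (the_elem (h x)))"
  have h0: "\<And>x. x \<in> carrier M \<Longrightarrow> h0 x \<in> L \<and> h x = pL (h0 x)"
  proof -
    fix x assume "x \<in> carrier M"
    then have "h x \<in> carrier N'" using h(1) unfolding mod_hom_def by blast
    then obtain l where l: "l \<in> L" "h x = pL l" using cN' by blast
    then have "h0 x = l" unfolding h0_def pL_def by simp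
    then show "h0 x \<in> L \<and> h x = pL (h0 x)" using l by simp
  qed
  have Mcl: "\<And>x y. x \<in> carrier M \<Longrightarrow> y \<in> carrier M \<Longrightarrow> x \<oplus>\<^bsub>M\<^esub> y \<in> carrier M"
    "\<And>a x. a \<in> carrier R \<Longrightarrow> x \<in> carrier M \<Longrightarrow> a \<odot>\<^bsub>M\<^esub> x \<in> carrier M"
    using lm abelian_monoid.a_closed[OF abelian_group.axioms(1)[OF lm_ag[OF lm]]] unfolding lmodule_def by auto
  have h0hom: "h0 \<in> mod_hom R M M"
    unfolding mod_hom_def
  proof (intro CollectI conjI ballI)
    fix x assume "x \<in> carrier M" then show "h0 x \<in> carrier M" using h0 Lsub by auto
  next
    fix x y assume xy: "x \<in> carrier M" "y \<in> carrier M"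
    have "pL (h0 (x \<oplus>\<^bsub>M\<^esub> y)) = h (x \<oplus>\<^bsub>M\<^esub> y)" using h0 xy Mcl by auto
    also have "\<dots> = h x \<oplus>\<^bsub>N'\<^esub> h y" using h(1) xy unfolding mod_hom_def by auto
    also have "\<dots> = pL (h0 x \<oplus>\<^bsub>M\<^esub> h0 y)" using h0 xy addN' by auto
    finally show "h0 (x \<oplus>\<^bsub>M\<^esub> y) = h0 x \<oplus>\<^bsub>M\<^esub> h0 y" using injp by (simp add: inj_eq)
  next
    fix a x assume ax: "a \<in> carrier R" "x \<in> carrier M"
    have "pL (h0 (a \<odot>\<^bsub>M\<^esub> x)) = h (a \<odot>\<^bsub>M\<^esub> x)" using h0 ax Mcl by auto
    also have "\<dots> = a \<odot>\<^bsub>N'\<^esub> h x" using h(1) ax unfolding mod_hom_def by auto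
    also have "\<dots> = pL (a \<odot>\<^bsub>M\<^esub> h0 x)" using h0 ax smN' by auto
    finally show "h0 (a \<odot>\<^bsub>M\<^esub> x) = a \<odot>\<^bsub>M\<^esub> h0 x" using injp by (simp add: inj_eq)
  qed
  have "h0 \<in> hom_into R M L" unfolding hom_into_def using h0hom h0 by auto
  moreover have "\<forall>x\<in>carrier M. h0 x \<oplus>\<^bsub>M\<^esub> \<ominus>\<^bsub>M\<^esub> x \<in> K"
  proof
    fix x assume x: "x \<in> carrier M"
    have "qmap M K (h0 x) = qmap M K x" using h(2) h0[OF x] gp x by metis
    then show "h0 x \<oplus>\<^bsub>M\<^esub> \<ominus>\<^bsub>M\<^esub> x \<in> K" using qmap_eq[OF lm K] x h0[OF x] Lsub by auto
  qed
  ultimately show ?thesis by blast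
qed

theorem proposition4p38:
  fixes R :: "('r, 'z) ring_scheme" and M :: "('r, 'a) module"
  assumes "ring R"
    and "lmodule R M"
    and "projective_in_sigma R M"
  shows "lowest_radical R M \<subseteq> jac_rad R M"
proof
  note lm = assms(2)
  have ag: "abelian_group M" using lm lm_ag by auto
  interpret abelian_group M by fact
  have Lm: "\<And>a x. a \<in> carrier R \<Longrightarrow> x \<in> carrier M \<Longrightarrow> a \<odot>\<^bsub>M\<^esub> x \<in> carrier M"
    using lm unfolding lmodule_def by auto
  fix x assume x: "x \<in> lowest_radical R M"
  show "x \<in> jac_rad R M" unfolding jac_rad_def
  proof (intro IntI InterI)
    show "x \<in> carrier M" using x unfolding lowest_radical_def by auto
    fix K assume "K \<in> {K. maximal_submod R M K}"
    then have Km: "maximal_submod R M K" by simp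
    then have K: "submod R M K" and Kne: "K \<noteq> carrier M"
      and Kmax: "\<And>K'. submod R M K' \<Longrightarrow> K \<subseteq> K' \<Longrightarrow> K' = K \<or> K' = carrier M"
      unfolding maximal_submod_def by auto
    have Ks: "K \<subseteq> carrier M" "\<zero>\<^bsub>M\<^esub> \<in> K" "\<And>a b. a \<in> K \<Longrightarrow> b \<in> K \<Longrightarrow> a \<oplus>\<^bsub>M\<^esub> b \<in> K"
       "\<And>a. a \<in> K \<Longrightarrow> \<ominus>\<^bsub>M\<^esub> a \<in> K" "\<And>a r. r \<in> carrier R \<Longrightarrow> a \<in> K \<Longrightarrow> r \<odot>\<^bsub>M\<^esub> a \<in> K"
      using K unfolding submod_def by auto
    define Q where "Q = {y \<in> carrier M. \<forall>f\<in>mod_hom R M M. f y \<in> K}"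
    have QK: "Q \<subseteq> K" unfolding Q_def using hom_id by fastforce
    have homcl: "\<And>f y. f \<in> mod_hom R M M \<Longrightarrow> y \<in> carrier M \<Longrightarrow> f y \<in> carrier M"
      unfolding mod_hom_def by auto
    have Qsub: "submod R M Q" unfolding submod_def
    proof (intro conjI ballI)
      show "Q \<subseteq> carrier M" unfolding Q_def by auto
      have "\<And>f. f \<in> mod_hom R M M \<Longrightarrow> f \<zero>\<^bsub>M\<^esub> \<in> K"
      proof -
        fix f assume f: "f \<in> mod_hom R M M"
        have "f \<zero>\<^bsub>M\<^esub> = \<zero>\<^bsub>M\<^esub>" by (rule hom_basic(1)[OF lm lm f])
        then show "f \<zero>\<^bsub>M\<^esub> \<in> K" using Ks(2) by simp
      qed
      then show "\<zero>\<^bsub>M\<^esub> \<in> Q" unfolding Q_def by simp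
    next
      fix y z assume "y \<in> Q" "z \<in> Q"
      then show "y \<oplus>\<^bsub>M\<^esub> z \<in> Q" unfolding Q_def mod_hom_def using Ks(3) by auto
    next
      fix y assume y: "y \<in> Q"
      have "\<And>f. f \<in> mod_hom R M M \<Longrightarrow> f (\<ominus>\<^bsub>M\<^esub> y) \<in> K"
      proof -
        fix f assume f: "f \<in> mod_hom R M M"
        have "f (\<ominus>\<^bsub>M\<^esub> y) = \<ominus>\<^bsub>M\<^esub> f y" using hom_basic(2)[OF lm lm f] y unfolding Q_def by auto
        then show "f (\<ominus>\<^bsub>M\<^esub> y) \<in> K" using Ks(4) y f unfolding Q_def by auto
      qed
      then show "\<ominus>\<^bsub>M\<^esub> y \<in> Q" using y unfolding Q_def by auto
    next
      fix a y assume "a \<in> carrier R" "y \<in> Q"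
      then show "a \<odot>\<^bsub>M\<^esub> y \<in> Q" unfolding Q_def mod_hom_def using Ks(5) Lm by auto
    qed
    have Qfi: "Q \<in> fully_inv R M" unfolding fully_inv_def
    proof (intro CollectI conjI ballI)
      show "submod R M Q" by fact
      fix g assume g: "g \<in> mod_hom R M M"
      show "g ` Q \<subseteq> Q"
      proof
        fix z assume "z \<in> g ` Q"
        then obtain y where y: "y \<in> Q" "z = g y" by auto
        have "\<forall>f\<in>mod_hom R M M. f (g y) \<in> K" using y(1) hom_comp[OF _ g] unfolding Q_def by auto
        then show "z \<in> Q" using y g homcl unfolding Q_def by auto
      qed
    qed
    have Qne: "Q \<noteq> carrier M" using QK Kne Ks(1) by auto
    have Qprime: "\<forall>N\<in>fully_inv R M. \<forall>L\<in>fully_inv R M. prod_M R M N L \<subseteq> Q \<longrightarrow> N \<subseteq> Q \<or> L \<subseteq> Q"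
    proof (intro ballI impI)
      fix N L assume N: "N \<in> fully_inv R M" and L: "L \<in> fully_inv R M" and P: "prod_M R M N L \<subseteq> Q"
      show "N \<subseteq> Q \<or> L \<subseteq> Q"
      proof (rule ccontr)
        assume "\<not> (N \<subseteq> Q \<or> L \<subseteq> Q)"
        then obtain n l where n: "n \<in> N" "n \<notin> Q" and l: "l \<in> L" "l \<notin> Q" by auto
        have Nsub: "submod R M N" and Nfi: "\<And>f. f \<in> mod_hom R M M \<Longrightarrow> f ` N \<subseteq> N"
          using N unfolding fully_inv_def by auto
        have Lsub: "submod R M L" and Lfi: "\<And>f. f \<in> mod_hom R M M \<Longrightarrow> f ` L \<subseteq> L"
          using L unfolding fully_inv_def by auto
        have NM: "N \<subseteq> carrier M" and LM: "L \<subseteq> carrier M" using Nsub Lsub unfolding submod_def by auto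
        obtain f where f: "f \<in> mod_hom R M M" "f n \<notin> K" using n NM unfolding Q_def by auto
        define n0 where "n0 = f n"
        have n0: "n0 \<in> N" "n0 \<notin> K" using f n Nfi unfolding n0_def by auto
        obtain f' where f': "f' \<in> mod_hom R M M" "f' l \<notin> K" using l LM unfolding Q_def by auto
        define l0 where "l0 = f' l"
        have l0: "l0 \<in> L" "l0 \<notin> K" using f' l Lfi unfolding l0_def by auto
        define L' where "L' = {y \<in> carrier M. \<exists>l\<in>L. y \<oplus>\<^bsub>M\<^esub> \<ominus>\<^bsub>M\<^esub> l \<in> K}"
        have L'sub: "submod R M L'" unfolding L'_def by (rule sum_submod[OF lm K Lsub])
        have KL': "K \<subseteq> L'"
        proof
          fix y assume y: "y \<in> K"
          have yM: "y \<in> carrier M" using y Ks(1) by auto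
          have "y \<oplus>\<^bsub>M\<^esub> \<ominus>\<^bsub>M\<^esub> \<zero>\<^bsub>M\<^esub> \<in> K" using ag_alg6(1)[OF ag yM] y by simp
          then show "y \<in> L'" unfolding L'_def using y Ks(1) Lsub unfolding submod_def by auto
        qed
        have l0M: "l0 \<in> carrier M" using l0 LM by auto
        have "l0 \<in> L'" unfolding L'_def using l0 l0M ag_alg6(2)[OF ag l0M] Ks(2) by (auto intro!: bexI[of _ l0])
        then have "L' = carrier M" using Kmax[OF L'sub KL'] l0(2) by auto
        then have all: "\<forall>y\<in>carrier M. \<exists>l\<in>L. y \<oplus>\<^bsub>M\<^esub> \<ominus>\<^bsub>M\<^esub> l \<in> K" unfolding L'_def by auto
        obtain h0 where h0: "h0 \<in> hom_into R M L" "\<forall>x\<in>carrier M. h0 x \<oplus>\<^bsub>M\<^esub> \<ominus>\<^bsub>M\<^esub> x \<in> K"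
          using lift_into_L[OF lm assms(3) K Lsub all] by blast
        have n0M: "n0 \<in> carrier M" using n0 NM by auto
        have h0M: "h0 n0 \<in> carrier M" using h0(1) n0M unfolding hom_into_def mod_hom_def by auto
        have "h0 n0 \<in> prod_M R M N L" unfolding prod_M_def gen_submod_def
          using h0M h0(1) n0(1) by blast
        then have "h0 n0 \<in> K" using P QK by auto
        moreover have d: "h0 n0 \<oplus>\<^bsub>M\<^esub> \<ominus>\<^bsub>M\<^esub> n0 \<in> K" using h0(2) n0M by auto
        have "\<ominus>\<^bsub>M\<^esub> (h0 n0 \<oplus>\<^bsub>M\<^esub> \<ominus>\<^bsub>M\<^esub> n0) = n0 \<oplus>\<^bsub>M\<^esub> \<ominus>\<^bsub>M\<^esub> h0 n0"
          using ag_alg2[OF ag h0M n0M] .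
        then have "n0 \<oplus>\<^bsub>M\<^esub> \<ominus>\<^bsub>M\<^esub> h0 n0 \<in> K" using Ks(4)[OF d] by simp
        ultimately have "(n0 \<oplus>\<^bsub>M\<^esub> \<ominus>\<^bsub>M\<^esub> h0 n0) \<oplus>\<^bsub>M\<^esub> h0 n0 \<in> K" using Ks(3) by blast
        then show False using ag_alg4[OF ag n0M h0M] n0(2) by simp
      qed
    qed
    have "Q \<in> spec_fi R M" unfolding spec_fi_def using Qfi Qne Qprime by blast
    then have "x \<in> Q" using x unfolding lowest_radical_def by auto
    then show "x \<in> K" using QK by auto
  qed
qed

end
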